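(* Let $\mathcal{R}$ be a ring and $(\mathcal{C}^{\bullet},\partial)$ a bigraded cochain complex of $\mathcal{R}$-modules as in the context. Then there exists a well-defined $\mathcal{R}$-linear map $\rho_{k}:\mathcal{A}^{k}\to H^{k+1}(\mathcal{N}_{0},\overline{\partial})$ given by \[ \rho_{k}(\xi):=[\partial_{2,-1}\xi_{k-1,1}+\partial_{1,0}\eta_{k,0}], \] where $\eta\in\mathcal{C}^{k}$ is any element with $\pi_{1}\eta=\xi$ and $\pi_{1}(\partial\eta)=0$ (the class being independent of this choice). Moreover, $\mathcal{Z}^{k}_{1}=\ker(\rho_{k})$.
   Context: Setting: $\mathcal{C}^{k}=\bigoplus_{p+q=k}\mathcal{C}^{p,q}$ with $\mathcal{C}^{p,q}=\{0\}$ if $p<0$ or $q<0$; $\partial$ is $\mathcal{R}$-linear of degree $1$, $\partial^{2}=0$, $\partial=\partial_{2,-1}+\partial_{1,0}+\partial_{0,1}$ with $\partial_{i,j}(\mathcal{C}^{p,q})\subseteq\mathcal{C}^{p+i,q+j}$. For $\eta\in\mathcal{C}^k$, $\eta_{p,q}$ is its $\mathcal{C}^{p,q}$-component. $G^{q}\mathcal{C}:=\bigoplus_{j\geq q}\mathcal{C}^{i,j}$, $\pi_{q}:\mathcal{C}\to G^{q}\mathcal{C}$ the projection along the bigrading. $\mathcal{N}^{p,q}:=\ker(\partial_{0,1}|_{\mathcal{C}^{p,q}})\cap\ker(\partial_{2,-1}|_{\mathcal{C}^{p,q}})$, $\mathcal{N}_{q}:=\bigoplus_{p}\mathcal{N}^{p-q,q}$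 (degree-$m$ part $\mathcal{N}^{m-q,q}$), a subcomplex with differential $\overline{\partial}:=\partial|_{\mathcal{N}_q}$; in particular $\mathcal{N}_0$ consists of the $\partial_{0,1}$-closed elements of $\mathcal{C}^{\bullet,0}$. $\mathcal{A}^{k}:=\{\pi_{1}(\eta)\mid\eta\in\mathcal{C}^{k},\ \pi_{1}(\partial\eta)=0\}$. $\mathcal{M}^{k}:=\{\eta\in\mathcal{C}^{k}\mid(\partial\eta)_{i,j}\in B^{k+1}(\mathcal{N}_{j},\overline{\partial})\ \forall\, i+j=k+1\}$ and $\mathcal{Z}^{k}_{1}:=\{\pi_{1}(\eta)\mid\eta\in\mathcal{M}^{k},\ \pi_{1}(\partial\eta)=0\}$. *)

theory Defs
  imports Main
begin

text \<open>
  All modules C^{p,q} are realised as R-submodules (carrier sets C p q) of one ambient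
  left R-module 'm with scalar multiplication sm.  An element of the total degree-k
  space C^k = (direct sum over p+q=k of C^{p,q}) is a function eta :: nat => 'm with
  eta p the (p,k-p)-component, eta p in C p (k-p) for p <= k and eta p = 0 for p > k.
  The three components of the differential are given by maps indexed by the source
  bidegree: d21 p q : C^{p,q} -> C^{p+2,q-1}, d10 p q : C^{p,q} -> C^{p+1,q},
  d01 p q : C^{p,q} -> C^{p,q+1}.
\<close>

definition lmodule :: "('r::ring_1 \<Rightarrow> 'm::ab_group_add \<Rightarrow> 'm) \<Rightarrow> bool" where
  "lmodule sm \<longleftrightarrow>
     (\<forall>a x y. sm a (x + y) = sm a x + sm a y) \<and>
     (\<forall>a b x. sm (a + b) x = sm a x + sm b x) \<and>
     (\<forall>a b x. sm (a * b) x = sm a (sm b x)) \<and>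
     (\<forall>x. sm 1 x = x)"

definition submodule :: "('r::ring_1 \<Rightarrow> 'm::ab_group_add \<Rightarrow> 'm) \<Rightarrow> 'm set \<Rightarrow> bool" where
  "submodule sm S \<longleftrightarrow> 0 \<in> S \<and> (\<forall>x\<in>S. \<forall>y\<in>S. x + y \<in> S) \<and>
     (\<forall>x\<in>S. - x \<in> S) \<and> (\<forall>a. \<forall>x\<in>S. sm a x \<in> S)"

definition linear_on :: "('r::ring_1 \<Rightarrow> 'm::ab_group_add \<Rightarrow> 'm) \<Rightarrow> 'm set \<Rightarrow> ('m \<Rightarrow> 'm) \<Rightarrow> bool" where
  "linear_on sm S f \<longleftrightarrow> (\<forall>x\<in>S. \<forall>y\<in>S. f (x + y) = f x + f y) \<and>
     (\<forall>a. \<forall>x\<in>S. f (sm a x) = sm a (f x))"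

definition Ck :: "(nat \<Rightarrow> nat \<Rightarrow> 'm::zero set) \<Rightarrow> nat \<Rightarrow> (nat \<Rightarrow> 'm) set" where
  "Ck C k = {\<eta>. (\<forall>p\<le>k. \<eta> p \<in> C p (k - p)) \<and> (\<forall>p>k. \<eta> p = 0)}"

definition Dtot :: "(nat \<Rightarrow> nat \<Rightarrow> 'm \<Rightarrow> 'm) \<Rightarrow> (nat \<Rightarrow> nat \<Rightarrow> 'm \<Rightarrow> 'm) \<Rightarrow>
    (nat \<Rightarrow> nat \<Rightarrow> 'm \<Rightarrow> 'm) \<Rightarrow> nat \<Rightarrow> (nat \<Rightarrow> 'm::ab_group_add) \<Rightarrow> nat \<Rightarrow> 'm" where
  "Dtot d21 d10 d01 k \<eta> = (\<lambda>p. if p \<le> k + 1 then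
      (if 2 \<le> p then d21 (p - 2) (k + 2 - p) (\<eta> (p - 2)) else 0)
    + (if 1 \<le> p then d10 (p - 1) (k + 1 - p) (\<eta> (p - 1)) else 0)
    + (if p \<le> k then d01 p (k - p) (\<eta> p) else 0)
    else 0)"

definition bigraded_complex :: "('r::ring_1 \<Rightarrow> 'm::ab_group_add \<Rightarrow> 'm) \<Rightarrow> (nat \<Rightarrow> nat \<Rightarrow> 'm set) \<Rightarrow>
    (nat \<Rightarrow> nat \<Rightarrow> 'm \<Rightarrow> 'm) \<Rightarrow> (nat \<Rightarrow> nat \<Rightarrow> 'm \<Rightarrow> 'm) \<Rightarrow> (nat \<Rightarrow> nat \<Rightarrow> 'm \<Rightarrow> 'm) \<Rightarrow> bool" where
  "bigraded_complex sm C d21 d10 d01 \<longleftrightarrow>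
     lmodule sm \<and> (\<forall>p q. submodule sm (C p q)) \<and>
     (\<forall>p q. linear_on sm (C p q) (d21 p q) \<and> linear_on sm (C p q) (d10 p q)
            \<and> linear_on sm (C p q) (d01 p q)) \<and>
     (\<forall>p q. \<forall>x\<in>C p q. d21 p q x \<in> (if q = 0 then {0} else C (p + 2) (q - 1))) \<and>
     (\<forall>p q. \<forall>x\<in>C p q. d10 p q x \<in> C (p + 1) q) \<and>
     (\<forall>p q. \<forall>x\<in>C p q. d01 p q x \<in> C p (q + 1)) \<and>
     (\<forall>k. \<forall>\<eta>\<in>Ck C k. Dtot d21 d10 d01 (k + 1) (Dtot d21 d10 d01 k \<eta>) = (\<lambda>_. 0))"

text \<open>Projection pi_1 onto G^1 C (components with q >= 1, i.e. p < k) in degree k.\<close>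
definition pi1 :: "nat \<Rightarrow> (nat \<Rightarrow> 'm::zero) \<Rightarrow> nat \<Rightarrow> 'm" where
  "pi1 k \<eta> = (\<lambda>p. if p < k then \<eta> p else 0)"

definition single :: "nat \<Rightarrow> 'm::zero \<Rightarrow> nat \<Rightarrow> 'm" where
  "single p x = (\<lambda>i. if i = p then x else 0)"

definition fadd :: "(nat \<Rightarrow> 'm::plus) \<Rightarrow> (nat \<Rightarrow> 'm) \<Rightarrow> nat \<Rightarrow> 'm" where
  "fadd f g = (\<lambda>i. f i + g i)"

definition fsm :: "('r \<Rightarrow> 'm \<Rightarrow> 'm) \<Rightarrow> 'r \<Rightarrow> (nat \<Rightarrow> 'm) \<Rightarrow> nat \<Rightarrow> 'm" where
  "fsm sm a f = (\<lambda>i. sm a (f i))"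

definition Ak where
  "Ak C d21 d10 d01 k = pi1 k ` {\<eta> \<in> Ck C k. pi1 (k + 1) (Dtot d21 d10 d01 k \<eta>) = (\<lambda>_. 0)}"

definition Npq where
  "Npq C d21 d01 p q = {x \<in> C p q. d01 p q x = 0 \<and> d21 p q x = 0}"

text \<open>Degree-m part of the subcomplex N_j, namely N^{m-j,j}, as a subset of C^m.\<close>
definition NN where
  "NN C d21 d01 j m = (if j \<le> m then single (m - j) ` Npq C d21 d01 (m - j) j else {\<lambda>_. 0})"

text \<open>Coboundaries B^{k+1}(N_j, dbar) with dbar the restriction of the total differential.\<close>
definition BN where
  "BN C d21 d10 d01 j k = Dtot d21 d10 d01 k ` NN C d21 d01 j k"

definition ZN where
  "ZN C d21 d10 d01 j m = {\<zeta> \<in> NN C d21 d01 j m. Dtot d21 d10 d01 m \<zeta> = (\<lambda>_. 0)}"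

text \<open>Cohomology class in H^{k+1}(N_0, dbar) of a (k+1)-cochain, as a coset.\<close>
definition cls where
  "cls C d21 d10 d01 k z = fadd z ` BN C d21 d10 d01 0 k"

definition H0 where
  "H0 C d21 d10 d01 k = cls C d21 d10 d01 k ` ZN C d21 d10 d01 0 (k + 1)"

definition Mk where
  "Mk C d21 d10 d01 k = {\<eta> \<in> Ck C k. \<forall>i \<le> k + 1.
      single i (Dtot d21 d10 d01 k \<eta> i) \<in> BN C d21 d10 d01 (k + 1 - i) k}"

definition Z1 where
  "Z1 C d21 d10 d01 k = pi1 k ` {\<eta> \<in> Mk C d21 d10 d01 k. pi1 (k + 1) (Dtot d21 d10 d01 k \<eta>) = (\<lambda>_. 0)}"

text \<open>The representative d21 xi_{k-1,1} + d10 eta_{k,0}, placed in bidegree (k+1,0);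
  xi_{-1,1} = 0 when k = 0.\<close>
definition rho_rep where
  "rho_rep d21 d10 k \<xi> \<eta> =
     single (k + 1) ((if 1 \<le> k then d21 (k - 1) 1 (\<xi> (k - 1)) else 0) + d10 k 0 (\<eta> k))"

end

theory Submission imports Defs begin

locale bc =
  fixes sm :: "'r::ring_1 \<Rightarrow> 'm::ab_group_add \<Rightarrow> 'm"
    and C :: "nat \<Rightarrow> nat \<Rightarrow> 'm set"
    and d21 d10 d01 :: "nat \<Rightarrow> nat \<Rightarrow> 'm \<Rightarrow> 'm"
  assumes bc: "bigraded_complex sm C d21 d10 d01"
begin

lemmas bcU = bc[unfolded bigraded_complex_def]
lemmas bcE = conjunct1[OF bcU] conjunct1[OF conjunct2[OF bcU]]
  conjunct1[OF conjunct2[OF conjunct2[OF bcU]]]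
  conjunct1[OF conjunct2[OF conjunct2[OF conjunct2[OF bcU]]]]
  conjunct1[OF conjunct2[OF conjunct2[OF conjunct2[OF conjunct2[OF bcU]]]]]
  conjunct1[OF conjunct2[OF conjunct2[OF conjunct2[OF conjunct2[OF conjunct2[OF bcU]]]]]]
  conjunct2[OF conjunct2[OF conjunct2[OF conjunct2[OF conjunct2[OF conjunct2[OF bcU]]]]]]

lemma lm: "lmodule sm" by (rule bcE(1))
lemma sm_add: "sm a (x + y) = sm a x + sm a y" using lm unfolding lmodule_def by blast
lemma sm_zero[simp]: "sm a 0 = 0" using sm_add[of a 0 0] by simp
lemma sub: "submodule sm (C p q)" using bcE(2) by blast
lemma C0[simp]: "0 \<in> C p q" using sub unfolding submodule_def by blast
lemma Cadd: "x \<in> C p q \<Longrightarrow> y \<in> C p q \<Longrightarrow> x + y \<in> C p q" using sub unfolding submodule_def by blast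
lemma Cneg: "x \<in> C p q \<Longrightarrow> - x \<in> C p q" using sub unfolding submodule_def by blast
lemma Csm: "x \<in> C p q \<Longrightarrow> sm a x \<in> C p q" using sub unfolding submodule_def by blast
lemma Cdiff: "x \<in> C p q \<Longrightarrow> y \<in> C p q \<Longrightarrow> x - y \<in> C p q"
  unfolding diff_conv_add_uminus by (rule Cadd, assumption, rule Cneg)

lemma lins: "linear_on sm (C p q) (d21 p q) \<and> linear_on sm (C p q) (d10 p q)
            \<and> linear_on sm (C p q) (d01 p q)" using bcE(3) by blast
lemma d21_add: "x \<in> C p q \<Longrightarrow> y \<in> C p q \<Longrightarrow> d21 p q (x + y) = d21 p q x + d21 p q y"
  using lins unfolding linear_on_def by blast
lemma d10_add: "x \<in> C p q \<Longrightarrow> y \<in> C p q \<Longrightarrow> d10 p q (x + y) = d10 p q x + d10 p q y"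
  using lins unfolding linear_on_def by blast
lemma d01_add: "x \<in> C p q \<Longrightarrow> y \<in> C p q \<Longrightarrow> d01 p q (x + y) = d01 p q x + d01 p q y"
  using lins unfolding linear_on_def by blast
lemma d21_sm: "x \<in> C p q \<Longrightarrow> d21 p q (sm a x) = sm a (d21 p q x)"
  using lins unfolding linear_on_def by blast
lemma d10_sm: "x \<in> C p q \<Longrightarrow> d10 p q (sm a x) = sm a (d10 p q x)"
  using lins unfolding linear_on_def by blast
lemma d01_sm: "x \<in> C p q \<Longrightarrow> d01 p q (sm a x) = sm a (d01 p q x)"
  using lins unfolding linear_on_def by blast
lemma d21_0[simp]: "d21 p q 0 = 0" using d21_add[OF C0 C0, of p q] by simp
lemma d10_0[simp]: "d10 p q 0 = 0" using d10_add[OF C0 C0, of p q] by simp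
lemma d01_0[simp]: "d01 p q 0 = 0" using d01_add[OF C0 C0, of p q] by simp

lemma d21_gen: "x \<in> C p q \<Longrightarrow> d21 p q x \<in> (if q = 0 then {0} else C (p + 2) (q - 1))"
  using bcE(4) by blast
lemma d21_in: "x \<in> C p q \<Longrightarrow> 0 < q \<Longrightarrow> d21 p q x \<in> C (p + 2) (q - 1)"
  using d21_gen[of x p q] by simp
lemma d21_q0: "x \<in> C p 0 \<Longrightarrow> d21 p 0 x = 0"
  using d21_gen[of x p 0] by simp
lemma d10_in: "x \<in> C p q \<Longrightarrow> d10 p q x \<in> C (p + 1) q"
  using bcE(5) by blast
lemma d01_in: "x \<in> C p q \<Longrightarrow> d01 p q x \<in> C p (q + 1)"
  using bcE(6) by blast
lemma DD: "\<eta> \<in> Ck C k \<Longrightarrow> Dtot d21 d10 d01 (k + 1) (Dtot d21 d10 d01 k \<eta>) = (\<lambda>_. 0)"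
  using bcE(7) by blast

lemma CkI: "(\<And>p. p \<le> k \<Longrightarrow> \<eta> p \<in> C p (k - p)) \<Longrightarrow> (\<And>p. k < p \<Longrightarrow> \<eta> p = 0) \<Longrightarrow> \<eta> \<in> Ck C k"
  unfolding Ck_def by (simp only: mem_Collect_eq, blast?)
lemma Ck_in: "\<eta> \<in> Ck C k \<Longrightarrow> i \<le> k \<Longrightarrow> q = k - i \<Longrightarrow> \<eta> i \<in> C i q"
  unfolding Ck_def by (simp only: mem_Collect_eq, blast?)
lemma Ck_out: "\<eta> \<in> Ck C k \<Longrightarrow> k < p \<Longrightarrow> \<eta> p = 0"
  unfolding Ck_def by (simp only: mem_Collect_eq, blast?)
lemma Ck_zero: "(\<lambda>_. 0) \<in> Ck C k" by (rule CkI) simp_all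
lemma Ck_add: assumes "f \<in> Ck C k" "g \<in> Ck C k" shows "fadd f g \<in> Ck C k"
proof (rule CkI)
  fix p assume "p \<le> k" then show "fadd f g p \<in> C p (k - p)"
    unfolding fadd_def using Cadd[OF Ck_in[OF assms(1)] Ck_in[OF assms(2)]] by blast
next
  fix p assume "k < p" then show "fadd f g p = 0"
    unfolding fadd_def using Ck_out[OF assms(1)] Ck_out[OF assms(2)] by simp
qed
lemma Ck_sm: assumes "f \<in> Ck C k" shows "fsm sm a f \<in> Ck C k"
proof (rule CkI)
  fix p assume "p \<le> k" then show "fsm sm a f p \<in> C p (k - p)"
    unfolding fsm_def using Csm[OF Ck_in[OF assms(1)]] by blast
next
  fix p assume "k < p" then show "fsm sm a f p = 0"
    unfolding fsm_def using Ck_out[OF assms(1)] by simp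
qed
lemma Ck_diff: assumes "f \<in> Ck C k" "g \<in> Ck C k" shows "(\<lambda>p. f p - g p) \<in> Ck C k"
proof (rule CkI)
  fix p assume "p \<le> k" then show "f p - g p \<in> C p (k - p)"
    using Cdiff[OF Ck_in[OF assms(1)] Ck_in[OF assms(2)]] by blast
next
  fix p assume "k < p" then show "f p - g p = 0"
    using Ck_out[OF assms(1)] Ck_out[OF assms(2)] by simp
qed
lemma Ck_single: assumes "x \<in> C k 0" shows "single k x \<in> Ck C k"
proof (rule CkI)
  fix p assume "p \<le> k" then show "single k x p \<in> C p (k - p)"
    unfolding single_def using assms by (cases "p = k") simp_all
next
  fix p assume "k < p" then show "single k x p = 0"
    unfolding single_def by simp
qed

abbreviation D where "D \<equiv> Dtot d21 d10 d01"

lemma Dtot_zero: "D k (\<lambda>_. 0) = (\<lambda>_. 0)"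
  by (rule ext) (simp add: Dtot_def)

lemma Dtot_add: assumes f: "f \<in> Ck C k" and g: "g \<in> Ck C k"
  shows "D k (fadd f g) = fadd (D k f) (D k g)"
proof (rule ext)
  fix p
  have t1: "(if 2 \<le> p then d21 (p - 2) (k + 2 - p) (f (p - 2) + g (p - 2)) else 0)
     = (if 2 \<le> p then d21 (p - 2) (k + 2 - p) (f (p - 2)) else 0)
      + (if 2 \<le> p then d21 (p - 2) (k + 2 - p) (g (p - 2)) else 0)" if "p \<le> k + 1"
  proof (cases "2 \<le> p")
    case True
    then show ?thesis using that by (simp add: d21_add[OF Ck_in[OF f] Ck_in[OF g]])
  qed simp
  have t2: "(if 1 \<le> p then d10 (p - 1) (k + 1 - p) (f (p - 1) + g (p - 1)) else 0)
     = (if 1 \<le> p then d10 (p - 1) (k + 1 - p) (f (p - 1)) else 0)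
      + (if 1 \<le> p then d10 (p - 1) (k + 1 - p) (g (p - 1)) else 0)" if "p \<le> k + 1"
  proof (cases "1 \<le> p")
    case True
    then show ?thesis using that by (simp add: d10_add[OF Ck_in[OF f] Ck_in[OF g]])
  qed simp
  have t3: "(if p \<le> k then d01 p (k - p) (f p + g p) else 0)
     = (if p \<le> k then d01 p (k - p) (f p) else 0)
      + (if p \<le> k then d01 p (k - p) (g p) else 0)"
  proof (cases "p \<le> k")
    case True
    then show ?thesis by (simp add: d01_add[OF Ck_in[OF f] Ck_in[OF g]])
  qed simp
  show "D k (fadd f g) p = fadd (D k f) (D k g) p"
  proof (cases "p \<le> k + 1")
    case True
    have T2: "p \<le> 1 + k" using True by simp
    have "D k (fadd f g) p = (if 2 \<le> p then d21 (p - 2) (k + 2 - p) (f (p - 2) + g (p - 2)) else 0)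
       + (if 1 \<le> p then d10 (p - 1) (k + 1 - p) (f (p - 1) + g (p - 1)) else 0)
       + (if p \<le> k then d01 p (k - p) (f p + g p) else 0)"
      by (simp only: Dtot_def fadd_def True if_True)
    also have "\<dots> = fadd (D k f) (D k g) p"
      by (simp only: t1[OF True] t2[OF True] t3,
          simp only: Dtot_def fadd_def True T2 if_True add_ac)
    finally show ?thesis .
  next
    case False
    then show ?thesis by (simp only: Dtot_def fadd_def False if_False add_0_left)
  qed
qed

lemma Dtot_sm: assumes f: "f \<in> Ck C k"
  shows "D k (fsm sm a f) = fsm sm a (D k f)"
proof (rule ext)
  fix p
  have t1: "(if 2 \<le> p then d21 (p - 2) (k + 2 - p) (sm a (f (p - 2))) else 0)
     = sm a (if 2 \<le> p then d21 (p - 2) (k + 2 - p) (f (p - 2)) else 0)" if "p \<le> k + 1"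
  proof (cases "2 \<le> p")
    case True
    then show ?thesis using that by (simp add: d21_sm[OF Ck_in[OF f]])
  qed simp
  have t2: "(if 1 \<le> p then d10 (p - 1) (k + 1 - p) (sm a (f (p - 1))) else 0)
     = sm a (if 1 \<le> p then d10 (p - 1) (k + 1 - p) (f (p - 1)) else 0)" if "p \<le> k + 1"
  proof (cases "1 \<le> p")
    case True
    then show ?thesis using that by (simp add: d10_sm[OF Ck_in[OF f]])
  qed simp
  have t3: "(if p \<le> k then d01 p (k - p) (sm a (f p)) else 0)
     = sm a (if p \<le> k then d01 p (k - p) (f p) else 0)"
  proof (cases "p \<le> k")
    case True
    then show ?thesis by (simp add: d01_sm[OF Ck_in[OF f]])
  qed simp
  show "D k (fsm sm a f) p = fsm sm a (D k f) p"
  proof (cases "p \<le> k + 1")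
    case True
    have "D k (fsm sm a f) p = (if 2 \<le> p then d21 (p - 2) (k + 2 - p) (sm a (f (p - 2))) else 0)
       + (if 1 \<le> p then d10 (p - 1) (k + 1 - p) (sm a (f (p - 1))) else 0)
       + (if p \<le> k then d01 p (k - p) (sm a (f p)) else 0)"
      by (simp only: Dtot_def fsm_def True if_True)
    also have "\<dots> = fsm sm a (D k f) p"
      by (simp only: t1[OF True] t2[OF True] t3 Dtot_def fsm_def True if_True sm_add)
    finally show ?thesis .
  next
    case False
    then show ?thesis by (simp only: Dtot_def fsm_def False if_False sm_zero)
  qed
qed

lemma Dtot_top: "D k f (k + 1) = (if 1 \<le> k then d21 (k - 1) 1 (f (k - 1)) else 0) + d10 k 0 (f k)"
  by (cases k) (simp_all add: Dtot_def)

lemma Dtot_top_in: assumes f: "f \<in> Ck C k" shows "D k f (k + 1) \<in> C (k + 1) 0"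
proof -
  have a: "(if 1 \<le> k then d21 (k - 1) 1 (f (k - 1)) else 0) \<in> C (k + 1) 0"
  proof (cases "1 \<le> k")
    case True
    have "f (k - 1) \<in> C (k - 1) 1" using Ck_in[OF f, of "k - 1" 1] True by simp
    from d21_in[OF this] True show ?thesis by simp
  qed simp
  have b: "d10 k 0 (f k) \<in> C (k + 1) 0" using d10_in[OF Ck_in[OF f, of k 0]] by simp
  show ?thesis unfolding Dtot_top using Cadd[OF a b] .
qed


lemma single_zero: "single i (0::'m) = (\<lambda>_. 0)"
  by (rule ext) (simp add: single_def)

lemma closed_single:
  assumes "\<eta> \<in> Ck C k" and cl: "pi1 (k + 1) (D k \<eta>) = (\<lambda>_. 0)"
  shows "D k \<eta> = single (k + 1) (D k \<eta> (k + 1))"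
proof (rule ext)
  fix p
  show "D k \<eta> p = single (k + 1) (D k \<eta> (k + 1)) p"
  proof (cases "p < k + 1")
    case True
    have "pi1 (k + 1) (D k \<eta>) p = 0" using cl by simp
    then show ?thesis using True unfolding pi1_def single_def by simp
  next
    case False
    show ?thesis
    proof (cases "p = k + 1")
      case True then show ?thesis by (simp add: single_def)
    next
      case F2: False
      with False have "\<not> p \<le> k + 1" by simp
      then have "D k \<eta> p = 0" by (simp only: Dtot_def if_False)
      then show ?thesis using F2 by (simp add: single_def)
    qed
  qed
qed

lemma closed_low:
  assumes cl: "pi1 (k + 1) (D k \<eta>) = (\<lambda>_. 0)" and "p \<le> k"
  shows "D k \<eta> p = 0"
proof -
  have "pi1 (k + 1) (D k \<eta>) p = 0" using cl by simp
  then show ?thesis using assms(2) unfolding pi1_def by simp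
qed

lemma rho_rep_eq:
  assumes "\<eta> \<in> Ck C k" and cl: "pi1 (k + 1) (D k \<eta>) = (\<lambda>_. 0)"
  shows "rho_rep d21 d10 k (pi1 k \<eta>) \<eta> = D k \<eta>"
proof -
  have e: "(if 1 \<le> k then d21 (k - 1) 1 (pi1 k \<eta> (k - 1)) else 0)
         = (if 1 \<le> k then d21 (k - 1) 1 (\<eta> (k - 1)) else 0)"
    by (cases "1 \<le> k") (simp_all add: pi1_def)
  show ?thesis
    unfolding rho_rep_def e Dtot_top[symmetric] using closed_single[OF assms] by simp
qed

lemma D_single_diag: "D k (single k x) k = d01 k 0 x"
proof (cases k)
  case 0 then show ?thesis by (simp add: Dtot_def single_def)
next
  case (Suc j)
  have n2: "k - 2 \<noteq> k" "k - 1 \<noteq> k" using Suc by simp_all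
  have a: "(if 2 \<le> k then d21 (k - 2) (k + 2 - k) (single k x (k - 2)) else 0) = 0"
    using n2 by (simp add: single_def)
  have b: "(if 1 \<le> k then d10 (k - 1) (k + 1 - k) (single k x (k - 1)) else 0) = 0"
    using n2 by (simp add: single_def)
  have "D k (single k x) k = (if 2 \<le> k then d21 (k - 2) (k + 2 - k) (single k x (k - 2)) else 0)
     + (if 1 \<le> k then d10 (k - 1) (k + 1 - k) (single k x (k - 1)) else 0)
     + d01 k (k - k) (single k x k)" by (simp add: Dtot_def)
  then show ?thesis using a b by (simp add: single_def)
qed

lemma lm_parts: "sm (a + b) x = sm a x + sm b x" "sm 1 x = x"
  using lm unfolding lmodule_def by blast+

lemma sm_neg1: "sm (- 1) x = - x"
proof -
  have z: "sm 0 x = 0" using lm_parts(1)[of 0 0 x] by simp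
  have "sm (1 + - 1) x = sm 1 x + sm (- 1) x" by (rule lm_parts(1))
  then have "0 = x + sm (- 1) x" using z lm_parts(2) by simp
  then show ?thesis by (simp add: eq_neg_iff_add_eq_0 add.commute)
qed

abbreviation B where "B k \<equiv> BN C d21 d10 d01 0 k"

lemma BN0: "B k = D k ` single k ` Npq C d21 d01 k 0"
  by (simp add: BN_def NN_def)

lemma Npq_in: "x \<in> Npq C d21 d01 p q \<longleftrightarrow> x \<in> C p q \<and> d01 p q x = 0 \<and> d21 p q x = 0"
  by (simp add: Npq_def)

lemma fadd_single: "fadd (single k x) (single k y) = single k (x + (y::'m))"
  by (rule ext) (simp add: fadd_def single_def)
lemma fsm_single: "fsm sm a (single k x) = single k (sm a x)"
  by (rule ext) (simp add: fsm_def single_def)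

lemma B_add: assumes "b1 \<in> B k" "b2 \<in> B k" shows "fadd b1 b2 \<in> B k"
proof -
  obtain x where x: "x \<in> Npq C d21 d01 k 0" "b1 = D k (single k x)" using assms(1) unfolding BN0 by blast
  obtain y where y: "y \<in> Npq C d21 d01 k 0" "b2 = D k (single k y)" using assms(2) unfolding BN0 by blast
  have xc: "x \<in> C k 0" "y \<in> C k 0" using x y Npq_in by blast+
  have "x + y \<in> Npq C d21 d01 k 0" using x(1) y(1) xc unfolding Npq_in
    by (simp add: Cadd d01_add d21_add)
  moreover have "fadd b1 b2 = D k (single k (x + y))"
    unfolding x y fadd_single[symmetric] by (rule Dtot_add[symmetric]) (simp_all add: Ck_single xc)
  ultimately show ?thesis unfolding BN0 by blast
qed

lemma B_sm: assumes "b1 \<in> B k" shows "fsm sm a b1 \<in> B k"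
proof -
  obtain x where x: "x \<in> Npq C d21 d01 k 0" "b1 = D k (single k x)" using assms(1) unfolding BN0 by blast
  have xc: "x \<in> C k 0" using x Npq_in by blast
  have "sm a x \<in> Npq C d21 d01 k 0" using x(1) xc unfolding Npq_in
    by (simp add: Csm d01_sm d21_sm)
  moreover have "fsm sm a b1 = D k (single k (sm a x))"
    unfolding x fsm_single[symmetric] by (rule Dtot_sm[symmetric]) (simp add: Ck_single xc)
  ultimately show ?thesis unfolding BN0 by blast
qed

lemma B_neg: assumes "b1 \<in> B k" shows "(\<lambda>p. - b1 p) \<in> B k"
proof -
  have "fsm sm (- 1) b1 = (\<lambda>p. - b1 p)" by (rule ext) (simp add: fsm_def sm_neg1)
  then show ?thesis using B_sm[OF assms, of "- 1"] by simp
qed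

lemma zero_BN: "(\<lambda>_. 0) \<in> BN C d21 d10 d01 j k"
proof (cases "j \<le> k")
  case True
  have "0 \<in> Npq C d21 d01 (k - j) j" by (simp add: Npq_in)
  then have "single (k - j) 0 \<in> NN C d21 d01 j k" using True by (simp add: NN_def)
  then have "D k (single (k - j) 0) \<in> BN C d21 d10 d01 j k" by (simp add: BN_def)
  then show ?thesis by (simp add: single_zero Dtot_zero)
next
  case False
  then show ?thesis by (simp add: BN_def NN_def Dtot_zero)
qed

lemma fadd_assoc: "fadd (fadd u v) w = fadd u (fadd (v::nat \<Rightarrow> 'm) w)"
  by (rule ext) (simp add: fadd_def add.assoc)
lemma fadd_zero_left: "fadd (\<lambda>_. 0) (w::nat \<Rightarrow> 'm) = w"
  by (rule ext) (simp add: fadd_def)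
lemma fadd_zero_right: "fadd (w::nat \<Rightarrow> 'm) (\<lambda>_. 0) = w"
  by (rule ext) (simp add: fadd_def)

lemma cls_eq: "cls C d21 d10 d01 k w = fadd w ` B k"
  by (simp add: cls_def)

lemma cls_shift: assumes c: "c \<in> B k"
  shows "cls C d21 d10 d01 k (fadd w c) = cls C d21 d10 d01 k w"
proof
  show "cls C d21 d10 d01 k (fadd w c) \<subseteq> cls C d21 d10 d01 k w"
  proof
    fix z assume "z \<in> cls C d21 d10 d01 k (fadd w c)"
    then obtain b where b: "b \<in> B k" "z = fadd (fadd w c) b" unfolding cls_eq by blast
    then have "z = fadd w (fadd c b)" by (simp add: fadd_assoc)
    moreover have "fadd c b \<in> B k" using B_add[OF c b(1)] .
    ultimately show "z \<in> cls C d21 d10 d01 k w" unfolding cls_eq by blast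
  qed
next
  show "cls C d21 d10 d01 k w \<subseteq> cls C d21 d10 d01 k (fadd w c)"
  proof
    fix z assume "z \<in> cls C d21 d10 d01 k w"
    then obtain b where b: "b \<in> B k" "z = fadd w b" unfolding cls_eq by blast
    have "z = fadd (fadd w c) (fadd (\<lambda>p. - c p) b)"
      unfolding b(2) by (rule ext) (simp add: fadd_def)
    moreover have "fadd (\<lambda>p. - c p) b \<in> B k" using B_add[OF B_neg[OF c] b(1)] .
    ultimately show "z \<in> cls C d21 d10 d01 k (fadd w c)" unfolding cls_eq by blast
  qed
qed

lemma in_cls: "w \<in> cls C d21 d10 d01 k w"
  unfolding cls_eq using zero_BN[of 0 k] fadd_zero_right[of w] by (metis image_eqI)

lemma cls_zero_B: "c \<in> B k \<Longrightarrow> cls C d21 d10 d01 k c = cls C d21 d10 d01 k (\<lambda>_. 0)"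
  using cls_shift[where c=c and k=k and w="\<lambda>_. 0"] by (simp add: fadd_zero_left)

lemma cls_zero_D: "cls C d21 d10 d01 k w = cls C d21 d10 d01 k (\<lambda>_. 0) \<Longrightarrow> w \<in> B k"
  using in_cls[where k=k and w=w] unfolding cls_eq by (auto simp: fadd_zero_left)


lemma WD:
  assumes e1: "\<eta> \<in> Ck C k" and c1: "pi1 (k + 1) (D k \<eta>) = (\<lambda>_. 0)"
      and e2: "\<eta>' \<in> Ck C k" and c2: "pi1 (k + 1) (D k \<eta>') = (\<lambda>_. 0)"
      and eq: "pi1 k \<eta> = pi1 k \<eta>'"
  shows "cls C d21 d10 d01 k (D k \<eta>) = cls C d21 d10 d01 k (D k \<eta>')"
proof -
  define \<delta> where "\<delta> = (\<lambda>p. \<eta> p - \<eta>' p)"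
  have dC: "\<delta> \<in> Ck C k" unfolding \<delta>_def by (rule Ck_diff[OF e1 e2])
  have dk: "\<delta> k \<in> C k 0" using Ck_in[OF dC, of k 0] by simp
  have ds: "\<delta> = single k (\<delta> k)"
  proof (rule ext)
    fix p show "\<delta> p = single k (\<delta> k) p"
    proof (cases "p < k")
      case True
      have "pi1 k \<eta> p = pi1 k \<eta>' p" using eq by simp
      then have "\<eta> p = \<eta>' p" using True by (simp add: pi1_def)
      then show ?thesis using True by (simp add: \<delta>_def single_def)
    next
      case False
      then show ?thesis using Ck_out[OF dC, of p] by (cases "p = k") (simp_all add: single_def)
    qed
  qed
  have ee: "\<eta> = fadd \<eta>' \<delta>" by (rule ext) (simp add: fadd_def \<delta>_def)
  have Dsum: "D k \<eta> = fadd (D k \<eta>') (D k \<delta>)" using ee Dtot_add[OF e2 dC] by simp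
  have "D k \<eta> k = D k \<eta>' k + D k \<delta> k" using Dsum by (simp add: fadd_def)
  then have "D k \<delta> k = 0" using closed_low[OF c1, of k] closed_low[OF c2, of k] by simp
  then have d01z: "d01 k 0 (\<delta> k) = 0" using D_single_diag[of k "\<delta> k"] ds[symmetric] by simp
  have "\<delta> k \<in> Npq C d21 d01 k 0" unfolding Npq_in using dk d01z d21_q0[OF dk] by simp
  then have "single k (\<delta> k) \<in> single k ` Npq C d21 d01 k 0" by (rule imageI)
  then have "D k (single k (\<delta> k)) \<in> B k" unfolding BN0 by (rule imageI)
  then have "D k \<delta> \<in> B k" using ds[symmetric] by simp
  then show ?thesis unfolding Dsum by (rule cls_shift)
qed

lemma ZN_mem:
  assumes e: "\<eta> \<in> Ck C k" and c: "pi1 (k + 1) (D k \<eta>) = (\<lambda>_. 0)"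
  shows "D k \<eta> \<in> ZN C d21 d10 d01 0 (k + 1)"
proof -
  define x where "x = D k \<eta> (k + 1)"
  have ds: "D k \<eta> = single (k + 1) x" unfolding x_def by (rule closed_single[OF e c])
  have xc: "x \<in> C (k + 1) 0" unfolding x_def by (rule Dtot_top_in[OF e])
  have "D (k + 1) (D k \<eta>) = (\<lambda>_. 0)" by (rule DD[OF e])
  then have "D (k + 1) (single (k + 1) x) (k + 1) = 0" using ds by simp
  then have "d01 (k + 1) 0 x = 0" using D_single_diag[of "k + 1" x] by simp
  then have "x \<in> Npq C d21 d01 (k + 1) 0" unfolding Npq_in using xc d21_q0[OF xc] by simp
  then have "D k \<eta> \<in> NN C d21 d01 0 (k + 1)" unfolding NN_def ds by simp
  then show ?thesis unfolding ZN_def using DD[OF e] by simp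
qed

definition rhof where
  "rhof k \<xi> = cls C d21 d10 d01 k (D k (SOME \<eta>. \<eta> \<in> Ck C k \<and> pi1 (k + 1) (D k \<eta>) = (\<lambda>_. 0) \<and> pi1 k \<eta> = \<xi>))"

lemma rho_eq:
  assumes e: "\<eta> \<in> Ck C k" and c: "pi1 (k + 1) (D k \<eta>) = (\<lambda>_. 0)"
  shows "rhof k (pi1 k \<eta>) = cls C d21 d10 d01 k (D k \<eta>)"
proof -
  let ?P = "\<lambda>\<eta>'. \<eta>' \<in> Ck C k \<and> pi1 (k + 1) (D k \<eta>') = (\<lambda>_. 0) \<and> pi1 k \<eta>' = pi1 k \<eta>"
  have p: "?P \<eta>" using e c by simp
  have h: "?P (SOME \<eta>'. ?P \<eta>')" by (rule someI[of ?P \<eta>]) (rule p)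
  show ?thesis unfolding rhof_def
    by (rule WD[OF conjunct1[OF h] conjunct1[OF conjunct2[OF h]] e c conjunct2[OF conjunct2[OF h]]])
qed

lemma Ak_obtain:
  assumes "\<xi> \<in> Ak C d21 d10 d01 k"
  obtains \<eta> where "\<eta> \<in> Ck C k" "pi1 (k + 1) (D k \<eta>) = (\<lambda>_. 0)" "\<xi> = pi1 k \<eta>"
proof -
  from assms obtain \<eta> where x: "\<xi> = pi1 k \<eta>"
    and h: "\<eta> \<in> {\<eta> \<in> Ck C k. pi1 (k + 1) (D k \<eta>) = (\<lambda>_. 0)}" unfolding Ak_def by (rule imageE)
  from h have "\<eta> \<in> Ck C k" "pi1 (k + 1) (D k \<eta>) = (\<lambda>_. 0)" by simp_all
  then show thesis by (rule that[OF _ _ x])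
qed

lemma Ak_intro:
  assumes "\<eta> \<in> Ck C k" "pi1 (k + 1) (D k \<eta>) = (\<lambda>_. 0)"
  shows "pi1 k \<eta> \<in> Ak C d21 d10 d01 k"
  unfolding Ak_def by (rule imageI, rule CollectI, rule conjI[OF assms])

lemma mlA: assumes "\<xi> \<in> Ak C d21 d10 d01 k" shows "rhof k \<xi> \<in> H0 C d21 d10 d01 k"
proof -
  from assms obtain \<eta> where e: "\<eta> \<in> Ck C k" and c: "pi1 (k + 1) (D k \<eta>) = (\<lambda>_. 0)" and x: "\<xi> = pi1 k \<eta>"
    by (rule Ak_obtain)
  show "rhof k \<xi> \<in> H0 C d21 d10 d01 k"
    unfolding x rho_eq[OF e c] H0_def using ZN_mem[OF e c] by (rule imageI)
qed

lemma mlB: assumes e: "\<eta> \<in> Ck C k" and c: "pi1 (k + 1) (D k \<eta>) = (\<lambda>_. 0)"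
  shows "rhof k (pi1 k \<eta>) = cls C d21 d10 d01 k (rho_rep d21 d10 k (pi1 k \<eta>) \<eta>)"
    unfolding rho_eq[OF e c] rho_rep_eq[OF e c] ..

lemma mlC: assumes xa: "\<xi> \<in> Ak C d21 d10 d01 k" and xa': "\<xi>' \<in> Ak C d21 d10 d01 k"
    and z: "z \<in> rhof k \<xi>" and z': "z' \<in> rhof k \<xi>'"
  shows "rhof k (fadd (fsm sm a \<xi>) (fsm sm b \<xi>')) = cls C d21 d10 d01 k (fadd (fsm sm a z) (fsm sm b z'))"
proof -
  obtain \<eta>1 where e1: "\<eta>1 \<in> Ck C k" and c1: "pi1 (k + 1) (D k \<eta>1) = (\<lambda>_. 0)" and x1: "\<xi> = pi1 k \<eta>1"
    using xa by (rule Ak_obtain)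
  obtain \<eta>2 where e2: "\<eta>2 \<in> Ck C k" and c2: "pi1 (k + 1) (D k \<eta>2) = (\<lambda>_. 0)" and x2: "\<xi>' = pi1 k \<eta>2"
    using xa' by (rule Ak_obtain)
  obtain c where zc: "z = fadd (D k \<eta>1) c" and cB: "c \<in> B k"
    using z unfolding x1 rho_eq[OF e1 c1] cls_eq by (rule imageE)
  obtain c' where zc': "z' = fadd (D k \<eta>2) c'" and cB': "c' \<in> B k"
    using z' unfolding x2 rho_eq[OF e2 c2] cls_eq by (rule imageE)
  define \<psi> where "\<psi> = fadd (fsm sm a \<eta>1) (fsm sm b \<eta>2)"
  have pC: "\<psi> \<in> Ck C k" unfolding \<psi>_def by (intro Ck_add Ck_sm e1 e2)
  have Dp: "D k \<psi> = fadd (fsm sm a (D k \<eta>1)) (fsm sm b (D k \<eta>2))"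
    unfolding \<psi>_def by (simp add: Dtot_add Ck_sm e1 e2 Dtot_sm)
  have pc: "pi1 (k + 1) (D k \<psi>) = (\<lambda>_. 0)"
  proof (rule ext)
    fix p show "pi1 (k + 1) (D k \<psi>) p = 0"
    proof (cases "p < k + 1")
      case True
      then have "p \<le> k" by simp
      then show ?thesis using closed_low[OF c1 \<open>p \<le> k\<close>] closed_low[OF c2 \<open>p \<le> k\<close>]
        unfolding Dp by (simp add: pi1_def fadd_def fsm_def)
    next
      case False then show ?thesis by (simp add: pi1_def)
    qed
  qed
  have px: "pi1 k \<psi> = fadd (fsm sm a \<xi>) (fsm sm b \<xi>')"
    unfolding x1 x2 \<psi>_def by (rule ext) (simp add: pi1_def fadd_def fsm_def)
  have zz: "fadd (fsm sm a z) (fsm sm b z') = fadd (D k \<psi>) (fadd (fsm sm a c) (fsm sm b c'))"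
    unfolding zc zc' Dp by (rule ext) (simp add: fadd_def fsm_def sm_add add_ac)
  have cc: "fadd (fsm sm a c) (fsm sm b c') \<in> B k" by (intro B_add B_sm cB cB')
  show "rhof k (fadd (fsm sm a \<xi>) (fsm sm b \<xi>')) = cls C d21 d10 d01 k (fadd (fsm sm a z) (fsm sm b z'))"
    unfolding px[symmetric] rho_eq[OF pC pc] zz cls_shift[OF cc] ..
qed

lemma mlD: "Z1 C d21 d10 d01 k = {\<xi> \<in> Ak C d21 d10 d01 k. rhof k \<xi> = cls C d21 d10 d01 k (\<lambda>_. 0)}"
proof
  show "Z1 C d21 d10 d01 k \<subseteq> {\<xi> \<in> Ak C d21 d10 d01 k. rhof k \<xi> = cls C d21 d10 d01 k (\<lambda>_. 0)}"
  proof
    fix \<xi> assume "\<xi> \<in> Z1 C d21 d10 d01 k"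
    then obtain \<eta> where x: "\<xi> = pi1 k \<eta>"
      and h: "\<eta> \<in> {\<eta> \<in> Mk C d21 d10 d01 k. pi1 (k + 1) (D k \<eta>) = (\<lambda>_. 0)}" unfolding Z1_def by (rule imageE)
    from h have m: "\<eta> \<in> Mk C d21 d10 d01 k" and c: "pi1 (k + 1) (D k \<eta>) = (\<lambda>_. 0)" by simp_all
    have e: "\<eta> \<in> Ck C k" using m unfolding Mk_def by simp
    have "\<forall>i \<le> k + 1. single i (D k \<eta> i) \<in> BN C d21 d10 d01 (k + 1 - i) k"
      using m unfolding Mk_def by simp
    then have "single (k + 1) (D k \<eta> (k + 1)) \<in> BN C d21 d10 d01 (k + 1 - (k + 1)) k"
      by (erule_tac x="k + 1" in allE) simp
    then have DB: "D k \<eta> \<in> B k" using closed_single[OF e c, symmetric] by simp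
    have "\<xi> \<in> Ak C d21 d10 d01 k" unfolding x by (rule Ak_intro[OF e c])
    moreover have "rhof k \<xi> = cls C d21 d10 d01 k (\<lambda>_. 0)"
      unfolding x rho_eq[OF e c] using cls_zero_B[OF DB] .
    ultimately show "\<xi> \<in> {\<xi> \<in> Ak C d21 d10 d01 k. rhof k \<xi> = cls C d21 d10 d01 k (\<lambda>_. 0)}" by simp
  qed
next
  show "{\<xi> \<in> Ak C d21 d10 d01 k. rhof k \<xi> = cls C d21 d10 d01 k (\<lambda>_. 0)} \<subseteq> Z1 C d21 d10 d01 k"
  proof
    fix \<xi> assume "\<xi> \<in> {\<xi> \<in> Ak C d21 d10 d01 k. rhof k \<xi> = cls C d21 d10 d01 k (\<lambda>_. 0)}"
    then have xa: "\<xi> \<in> Ak C d21 d10 d01 k" and r0: "rhof k \<xi> = cls C d21 d10 d01 k (\<lambda>_. 0)" by simp_all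
    obtain \<eta> where e: "\<eta> \<in> Ck C k" and c: "pi1 (k + 1) (D k \<eta>) = (\<lambda>_. 0)" and x: "\<xi> = pi1 k \<eta>"
      using xa by (rule Ak_obtain)
    have DB: "D k \<eta> \<in> B k" using r0 unfolding x rho_eq[OF e c] by (rule cls_zero_D)
    have mm: "\<eta> \<in> Mk C d21 d10 d01 k" unfolding Mk_def
    proof (intro CollectI conjI allI impI)
      show "\<eta> \<in> Ck C k" by (rule e)
    next
      fix i assume "i \<le> k + 1"
      show "single i (D k \<eta> i) \<in> BN C d21 d10 d01 (k + 1 - i) k"
      proof (cases "i = k + 1")
        case True
        then show ?thesis using DB closed_single[OF e c, symmetric] by simp
      next
        case False
        with \<open>i \<le> k + 1\<close> have "i \<le> k" by simp
        then have "D k \<eta> i = 0" by (rule closed_low[OF c])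
        then show ?thesis using zero_BN by (simp add: single_zero)
      qed
    qed
    show "\<xi> \<in> Z1 C d21 d10 d01 k" unfolding Z1_def x by (rule imageI, rule CollectI, rule conjI[OF mm c])
  qed
qed

lemma main_loc:
  "\<exists>\<rho>.
     (\<forall>\<xi>\<in>Ak C d21 d10 d01 k. \<rho> \<xi> \<in> H0 C d21 d10 d01 k) \<and>
     (\<forall>\<eta>\<in>Ck C k. pi1 (k + 1) (Dtot d21 d10 d01 k \<eta>) = (\<lambda>_. 0) \<longrightarrow>
        \<rho> (pi1 k \<eta>) = cls C d21 d10 d01 k (rho_rep d21 d10 k (pi1 k \<eta>) \<eta>)) \<and>
     (\<forall>a b \<xi> \<xi>' z z'. \<xi> \<in> Ak C d21 d10 d01 k \<longrightarrow> \<xi>' \<in> Ak C d21 d10 d01 k \<longrightarrow>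
        z \<in> \<rho> \<xi> \<longrightarrow> z' \<in> \<rho> \<xi>' \<longrightarrow>
        \<rho> (fadd (fsm sm a \<xi>) (fsm sm b \<xi>')) = cls C d21 d10 d01 k (fadd (fsm sm a z) (fsm sm b z'))) \<and>
     Z1 C d21 d10 d01 k = {\<xi> \<in> Ak C d21 d10 d01 k. \<rho> \<xi> = cls C d21 d10 d01 k (\<lambda>_. 0)}"
  apply (rule exI[of _ "rhof k"])
  apply (intro conjI ballI impI allI)
     apply (erule mlA)
    apply (erule (1) mlB)
   apply (erule (3) mlC)
  apply (rule mlD)
  done

end

theorem lemma5p2:
  fixes sm :: "'r::ring_1 \<Rightarrow> 'm::ab_group_add \<Rightarrow> 'm"
    and C :: "nat \<Rightarrow> nat \<Rightarrow> 'm set"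
    and d21 d10 d01 :: "nat \<Rightarrow> nat \<Rightarrow> 'm \<Rightarrow> 'm"
    and k :: nat
  assumes "bigraded_complex sm C d21 d10 d01"
  shows "\<exists>\<rho>.
     (\<forall>\<xi>\<in>Ak C d21 d10 d01 k. \<rho> \<xi> \<in> H0 C d21 d10 d01 k) \<and>
     (\<forall>\<eta>\<in>Ck C k. pi1 (k + 1) (Dtot d21 d10 d01 k \<eta>) = (\<lambda>_. 0) \<longrightarrow>
        \<rho> (pi1 k \<eta>) = cls C d21 d10 d01 k (rho_rep d21 d10 k (pi1 k \<eta>) \<eta>)) \<and>
     (\<forall>a b \<xi> \<xi>' z z'. \<xi> \<in> Ak C d21 d10 d01 k \<longrightarrow> \<xi>' \<in> Ak C d21 d10 d01 k \<longrightarrow>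
        z \<in> \<rho> \<xi> \<longrightarrow> z' \<in> \<rho> \<xi>' \<longrightarrow>
        \<rho> (fadd (fsm sm a \<xi>) (fsm sm b \<xi>')) = cls C d21 d10 d01 k (fadd (fsm sm a z) (fsm sm b z'))) \<and>
     Z1 C d21 d10 d01 k = {\<xi> \<in> Ak C d21 d10 d01 k. \<rho> \<xi> = cls C d21 d10 d01 k (\<lambda>_. 0)}"
proof -
  interpret bc sm C d21 d10 d01 by (rule bc.intro) (rule assms)
  show ?thesis by (rule main_loc)
qed

end
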